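(* Let $\mathbb{T}$ be a geometric theory over $\Sigma$, let $\{\mathbf{x}\mid\phi\}$ and $\{\mathbf{x},\mathbf{y}\mid\psi\}$ be formulas in context, and let $\mathbf{a}$ be a tuple of pairwise distinct elements of $\mathbb{S}$ of the same length as $\mathbf{y}$. Then the stabilization (with respect to the action $\theta$) of the basic open subset \[[\![\{\mathbf{x},\mathbf{y}\mid\psi\},\mathbf{a}]\!]=\{(\mathbf{M},[\mathbf{b}]):([\mathbf{b}],[\mathbf{a}])\in[\![\mathbf{x},\mathbf{y}\mid\phi\wedge\psi]\!]^{\mathbf{M}}\}\subseteq[\![\mathbf{x}\mid\phi]\!]\] is the definable subset $[\![\mathbf{x}\mid\phi\wedge\exists\mathbf{y}\,\psi]\!]\subseteq[\![\mathbf{x}\mid\phi]\!]$.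
   Context: $\Sigma$ is a single-sorted first-order signature with equality, $\kappa\geq|\Sigma|+\aleph_0$ an infinite cardinal, $\mathbb{S}$ a fixed set of cardinality at least $\kappa$. $M_{\mathbb{T}}$ is the set of $\mathbb{T}$-models whose underlying set is a quotient of a subset of $\mathbb{S}$ (elements written $[a]$), and $I_{\mathbb{T}}$ the set of isomorphisms between them. For a formula in context $\{\mathbf{x}\mid\phi\}$, $[\![\mathbf{x}\mid\phi]\!]=\{(\mathbf{M},[\mathbf{b}]):\mathbf{M}\in M_{\mathbb{T}},[\mathbf{b}]\in\phi^{\mathbf{M}}\}$, with the action $\theta(\mathbf{f}:\mathbf{M}\to\mathbf{N},(\mathbf{M},[\mathbf{b}]))=(\mathbf{N},\mathbf{f}([\mathbf{b}]))$ of $I_{\mathbb{T}}$. A subset is stable if it is closed under this action, and the stabilization of a subset is the least stable subset containing it. *)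

theory Defs
  imports Main
begin

datatype 'f trm = Var nat | App 'f "'f trm list"

datatype ('f, 'r, 'i) gfm =
    Tru
  | Rel 'r "'f trm list"
  | Eq "'f trm" "'f trm"
  | Conj "('f, 'r, 'i) gfm" "('f, 'r, 'i) gfm"
  | Disj "'i set" "'i \<Rightarrow> ('f, 'r, 'i) gfm"
  | Ex nat "('f, 'r, 'i) gfm"

fun fv_trm :: "'f trm \<Rightarrow> nat set" where
  "fv_trm (Var n) = {n}"
| "fv_trm (App g ts) = (\<Union>t\<in>set ts. fv_trm t)"

fun wf_trm :: "('f \<Rightarrow> nat) \<Rightarrow> 'f trm \<Rightarrow> bool" where
  "wf_trm arF (Var n) = True"
| "wf_trm arF (App g ts) = (length ts = arF g \<and> (\<forall>t\<in>set ts. wf_trm arF t))"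

primrec fv :: "('f, 'r, 'i) gfm \<Rightarrow> nat set" where
  "fv Tru = {}"
| "fv (Rel r ts) = (\<Union>t\<in>set ts. fv_trm t)"
| "fv (Eq s t) = fv_trm s \<union> fv_trm t"
| "fv (Conj p q) = fv p \<union> fv q"
| "fv (Disj I F) = (\<Union>i\<in>I. fv (F i))"
| "fv (Ex n p) = fv p - {n}"

primrec wf_fm :: "('f \<Rightarrow> nat) \<Rightarrow> ('r \<Rightarrow> nat) \<Rightarrow> ('f, 'r, 'i) gfm \<Rightarrow> bool" where
  "wf_fm arF arR Tru = True"
| "wf_fm arF arR (Rel r ts) = (length ts = arR r \<and> (\<forall>t\<in>set ts. wf_trm arF t))"
| "wf_fm arF arR (Eq s t) = (wf_trm arF s \<and> wf_trm arF t)"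
| "wf_fm arF arR (Conj p q) = (wf_fm arF arR p \<and> wf_fm arF arR q)"
| "wf_fm arF arR (Disj I F) = (\<forall>i\<in>I. wf_fm arF arR (F i))"
| "wf_fm arF arR (Ex n p) = wf_fm arF arR p"

definition fm_in_ctx :: "('f \<Rightarrow> nat) \<Rightarrow> ('r \<Rightarrow> nat) \<Rightarrow> nat list \<Rightarrow> ('f, 'r, 'i) gfm \<Rightarrow> bool" where
  "fm_in_ctx arF arR x p \<longleftrightarrow> distinct x \<and> wf_fm arF arR p \<and> fv p \<subseteq> set x"

definition Exs :: "nat list \<Rightarrow> ('f, 'r, 'i) gfm \<Rightarrow> ('f, 'r, 'i) gfm" where
  "Exs ys p = foldr Ex ys p"

type_synonym ('f, 'r, 'i) sequent = "nat list \<times> ('f, 'r, 'i) gfm \<times> ('f, 'r, 'i) gfm"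

definition geom_theory :: "('f \<Rightarrow> nat) \<Rightarrow> ('r \<Rightarrow> nat) \<Rightarrow> ('f, 'r, 'i) sequent set \<Rightarrow> bool" where
  "geom_theory arF arR T \<longleftrightarrow>
     (\<forall>(x, p, q)\<in>T. fm_in_ctx arF arR x p \<and> fm_in_ctx arF arR x q)"

text \<open>A structure: a subset dom of S, an equivalence relation eqv on it; the underlying
set is dom // eqv (elements are classes [a]); interpretations of function and relation
symbols on classes.\<close>
record ('a, 'f, 'r) strc =
  dom :: "'a set"
  eqv :: "('a \<times> 'a) set"
  fn  :: "'f \<Rightarrow> 'a set list \<Rightarrow> 'a set"
  rl  :: "'r \<Rightarrow> 'a set list set"

definition carrier :: "('a, 'f, 'r) strc \<Rightarrow> 'a set set" where
  "carrier M = dom M // eqv M"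

definition cls :: "('a, 'f, 'r) strc \<Rightarrow> 'a \<Rightarrow> 'a set" where
  "cls M a = eqv M `` {a}"

definition wf_strc :: "'a set \<Rightarrow> ('f \<Rightarrow> nat) \<Rightarrow> ('r \<Rightarrow> nat) \<Rightarrow> ('a, 'f, 'r) strc \<Rightarrow> bool" where
  "wf_strc S arF arR M \<longleftrightarrow>
     dom M \<subseteq> S \<and> equiv (dom M) (eqv M) \<and>
     (\<forall>g bs. (length bs = arF g \<and> set bs \<subseteq> carrier M \<longrightarrow> fn M g bs \<in> carrier M) \<and>
             (\<not> (length bs = arF g \<and> set bs \<subseteq> carrier M) \<longrightarrow> fn M g bs = undefined)) \<and>
     (\<forall>r. rl M r \<subseteq> {bs. length bs = arR r \<and> set bs \<subseteq> carrier M})"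

fun eval :: "('a, 'f, 'r) strc \<Rightarrow> (nat \<Rightarrow> 'a set) \<Rightarrow> 'f trm \<Rightarrow> 'a set" where
  "eval M v (Var n) = v n"
| "eval M v (App g ts) = fn M g (map (eval M v) ts)"

primrec sat :: "('a, 'f, 'r) strc \<Rightarrow> ('f, 'r, 'i) gfm \<Rightarrow> (nat \<Rightarrow> 'a set) \<Rightarrow> bool" where
  "sat M Tru v = True"
| "sat M (Rel r ts) v = (map (eval M v) ts \<in> rl M r)"
| "sat M (Eq s t) v = (eval M v s = eval M v t)"
| "sat M (Conj p q) v = (sat M p v \<and> sat M q v)"
| "sat M (Disj I F) v = (\<exists>i\<in>I. sat M (F i) v)"
| "sat M (Ex n p) v = (\<exists>c\<in>carrier M. sat M p (v(n := c)))"

definition asg :: "nat list \<Rightarrow> 'a set list \<Rightarrow> nat \<Rightarrow> 'a set" where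
  "asg x bs = (\<lambda>n. case map_of (zip x bs) n of Some c \<Rightarrow> c | None \<Rightarrow> undefined)"

definition interp :: "('a, 'f, 'r) strc \<Rightarrow> nat list \<Rightarrow> ('f, 'r, 'i) gfm \<Rightarrow> 'a set list set" where
  "interp M x p = {bs. length bs = length x \<and> set bs \<subseteq> carrier M \<and> sat M p (asg x bs)}"

definition is_model :: "'a set \<Rightarrow> ('f \<Rightarrow> nat) \<Rightarrow> ('r \<Rightarrow> nat) \<Rightarrow> ('f, 'r, 'i) sequent set
    \<Rightarrow> ('a, 'f, 'r) strc \<Rightarrow> bool" where
  "is_model S arF arR T M \<longleftrightarrow> wf_strc S arF arR M \<and>
     (\<forall>(x, p, q)\<in>T. interp M x p \<subseteq> interp M x q)"

definition M_T :: "'a set \<Rightarrow> ('f \<Rightarrow> nat) \<Rightarrow> ('r \<Rightarrow> nat) \<Rightarrow> ('f, 'r, 'i) sequent set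
    \<Rightarrow> ('a, 'f, 'r) strc set" where
  "M_T S arF arR T = {M. is_model S arF arR T M}"

definition is_iso :: "('f \<Rightarrow> nat) \<Rightarrow> ('r \<Rightarrow> nat) \<Rightarrow> ('a, 'f, 'r) strc \<Rightarrow> ('a, 'f, 'r) strc
    \<Rightarrow> ('a set \<Rightarrow> 'a set) \<Rightarrow> bool" where
  "is_iso arF arR M N f \<longleftrightarrow>
     bij_betw f (carrier M) (carrier N) \<and> (\<forall>c. c \<notin> carrier M \<longrightarrow> f c = undefined) \<and>
     (\<forall>g bs. length bs = arF g \<and> set bs \<subseteq> carrier M \<longrightarrow> f (fn M g bs) = fn N g (map f bs)) \<and>
     (\<forall>r bs. length bs = arR r \<and> set bs \<subseteq> carrier M \<longrightarrow> (bs \<in> rl M r \<longleftrightarrow> map f bs \<in> rl N r))"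

definition I_T :: "'a set \<Rightarrow> ('f \<Rightarrow> nat) \<Rightarrow> ('r \<Rightarrow> nat) \<Rightarrow> ('f, 'r, 'i) sequent set
    \<Rightarrow> (('a, 'f, 'r) strc \<times> ('a, 'f, 'r) strc \<times> ('a set \<Rightarrow> 'a set)) set" where
  "I_T S arF arR T = {(M, N, f). M \<in> M_T S arF arR T \<and> N \<in> M_T S arF arR T \<and> is_iso arF arR M N f}"

definition definable :: "'a set \<Rightarrow> ('f \<Rightarrow> nat) \<Rightarrow> ('r \<Rightarrow> nat) \<Rightarrow> ('f, 'r, 'i) sequent set
    \<Rightarrow> nat list \<Rightarrow> ('f, 'r, 'i) gfm \<Rightarrow> (('a, 'f, 'r) strc \<times> 'a set list) set" where
  "definable S arF arR T x p = {(M, bs). M \<in> M_T S arF arR T \<and> bs \<in> interp M x p}"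

text \<open>Stability under the action theta(f : M -> N, (M, [b])) = (N, f([b])).\<close>
definition stable :: "'a set \<Rightarrow> ('f \<Rightarrow> nat) \<Rightarrow> ('r \<Rightarrow> nat) \<Rightarrow> ('f, 'r, 'i) sequent set
    \<Rightarrow> (('a, 'f, 'r) strc \<times> 'a set list) set \<Rightarrow> bool" where
  "stable S arF arR T X \<longleftrightarrow>
     (\<forall>(M, N, f)\<in>I_T S arF arR T. \<forall>bs. (M, bs) \<in> X \<longrightarrow> (N, map f bs) \<in> X)"

definition stabilization :: "'a set \<Rightarrow> ('f \<Rightarrow> nat) \<Rightarrow> ('r \<Rightarrow> nat) \<Rightarrow> ('f, 'r, 'i) sequent set
    \<Rightarrow> nat list \<Rightarrow> ('f, 'r, 'i) gfm \<Rightarrow> (('a, 'f, 'r) strc \<times> 'a set list) set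
    \<Rightarrow> (('a, 'f, 'r) strc \<times> 'a set list) set" where
  "stabilization S arF arR T x p X =
     \<Inter> {Y. X \<subseteq> Y \<and> Y \<subseteq> definable S arF arR T x p \<and> stable S arF arR T Y}"

definition basic_open :: "'a set \<Rightarrow> ('f \<Rightarrow> nat) \<Rightarrow> ('r \<Rightarrow> nat) \<Rightarrow> ('f, 'r, 'i) sequent set
    \<Rightarrow> nat list \<Rightarrow> nat list \<Rightarrow> ('f, 'r, 'i) gfm \<Rightarrow> ('f, 'r, 'i) gfm \<Rightarrow> 'a list
    \<Rightarrow> (('a, 'f, 'r) strc \<times> 'a set list) set" where
  "basic_open S arF arR T x y p q a =
     {(M, bs). M \<in> M_T S arF arR T \<and> set a \<subseteq> dom M \<and>
               bs @ map (cls M) a \<in> interp M (x @ y) (Conj p q)}"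

end

theory Submission
  imports Defs
begin

lemma eval_coinc: "\<forall>n\<in>fv_trm t. v n = w n \<Longrightarrow> eval M v t = eval M w t"
proof (induction t)
  case (App g ts)
  then have "map (eval M v) ts = map (eval M w) ts" by auto
  then show ?case by (metis eval.simps(2))
qed simp

lemma sat_coinc: "\<forall>n\<in>fv p. v n = w n \<Longrightarrow> sat M p v = sat M p w"
proof (induction p arbitrary: v w)
  case (Rel r ts)
  then have "map (eval M v) ts = map (eval M w) ts" using eval_coinc[of _ v w M] by auto
  then show ?case by (metis sat.simps(2))
next
  case (Eq s t) then show ?case using eval_coinc[of _ v w M] by simp
next
  case (Conj p q)
  have "sat M p v = sat M p w" using Conj.IH(1)[of v w] Conj.prems by auto
  moreover have "sat M q v = sat M q w" using Conj.IH(2)[of v w] Conj.prems by auto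
  ultimately show ?case by simp
next
  case (Disj I F)
  have "\<And>i. i \<in> I \<Longrightarrow> sat M (F i) v = sat M (F i) w"
  proof -
    fix i assume i: "i \<in> I"
    then have "\<forall>n\<in>fv (F i). v n = w n" using Disj.prems by auto
    then show "sat M (F i) v = sat M (F i) w" using Disj.IH[of "F i" v w] by auto
  qed
  then show ?case by simp
next
  case (Ex n p)
  have "\<And>c. sat M p (v(n:=c)) = sat M p (w(n:=c))"
  proof -
    fix c show "sat M p (v(n:=c)) = sat M p (w(n:=c))"
    proof -
      have "\<forall>m\<in>fv p. (v(n:=c)) m = (w(n:=c)) m" using Ex.prems by auto
      then show ?thesis using Ex.IH[of "v(n:=c)" "w(n:=c)"] by blast
    qed
  qed
  then show ?case by simp
qed auto

lemma wf_fn: "wf_strc S arF arR M \<Longrightarrow> length bs = arF g \<Longrightarrow> set bs \<subseteq> carrier M \<Longrightarrow> fn M g bs \<in> carrier M"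
  unfolding wf_strc_def by metis

lemma iso_fn: "is_iso arF arR M N f \<Longrightarrow> length bs = arF g \<Longrightarrow> set bs \<subseteq> carrier M \<Longrightarrow> f (fn M g bs) = fn N g (map f bs)"
  unfolding is_iso_def by metis

lemma iso_rl: "is_iso arF arR M N f \<Longrightarrow> length bs = arR r \<Longrightarrow> set bs \<subseteq> carrier M \<Longrightarrow> (bs \<in> rl M r) = (map f bs \<in> rl N r)"
  unfolding is_iso_def by metis

lemma iso_bij: "is_iso arF arR M N f \<Longrightarrow> bij_betw f (carrier M) (carrier N)"
  unfolding is_iso_def by metis

lemma eval_iso:
  assumes iso: "is_iso arF arR M N f" and wf: "wf_strc S arF arR M"
  shows "wf_trm arF t \<Longrightarrow> \<forall>n\<in>fv_trm t. v n \<in> carrier M \<Longrightarrow>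
     eval M v t \<in> carrier M \<and> f (eval M v t) = eval N (\<lambda>m. f (v m)) t"
proof (induction t)
  case (App g ts)
  have ev: "\<forall>t\<in>set ts. eval M v t \<in> carrier M \<and> f (eval M v t) = eval N (\<lambda>m. f (v m)) t"
  proof
    fix t assume t: "t \<in> set ts"
    then have "wf_trm arF t" "\<forall>n\<in>fv_trm t. v n \<in> carrier M" using App.prems by auto
    then show "eval M v t \<in> carrier M \<and> f (eval M v t) = eval N (\<lambda>m. f (v m)) t"
      using App.IH t by blast
  qed
  have l: "length (map (eval M v) ts) = arF g" "set (map (eval M v) ts) \<subseteq> carrier M"
    using App.prems ev by auto
  have m: "map (eval N (\<lambda>m. f (v m))) ts = map f (map (eval M v) ts)" using ev by auto
  have c: "fn M g (map (eval M v) ts) \<in> carrier M" using l wf_fn[OF wf] by blast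
  have "f (fn M g (map (eval M v) ts)) = fn N g (map f (map (eval M v) ts))"
    using l iso_fn[OF iso] by blast
  then show ?case using c m by (metis eval.simps(2))
qed simp

lemma sat_iso:
  assumes iso: "is_iso arF arR M N f" and wf: "wf_strc S arF arR M"
  shows "wf_fm arF arR p \<Longrightarrow> \<forall>n\<in>fv p. v n \<in> carrier M \<Longrightarrow> sat M p v = sat N p (\<lambda>m. f (v m))"
proof (induction p arbitrary: v)
  case (Rel r ts)
  have ev: "\<forall>t\<in>set ts. eval M v t \<in> carrier M \<and> f (eval M v t) = eval N (\<lambda>m. f (v m)) t"
  proof
    fix t assume t: "t \<in> set ts"
    then have "wf_trm arF t" "\<forall>n\<in>fv_trm t. v n \<in> carrier M" using Rel.prems by auto
    then show "eval M v t \<in> carrier M \<and> f (eval M v t) = eval N (\<lambda>m. f (v m)) t"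
      using eval_iso[OF iso wf] by blast
  qed
  have l: "length (map (eval M v) ts) = arR r" "set (map (eval M v) ts) \<subseteq> carrier M"
    using Rel.prems ev by auto
  have m: "map (eval N (\<lambda>m. f (v m))) ts = map f (map (eval M v) ts)" using ev by auto
  have "(map (eval M v) ts \<in> rl M r) = (map f (map (eval M v) ts) \<in> rl N r)"
    using l iso_rl[OF iso] by blast
  then show ?case using m by (metis sat.simps(2))
next
  case (Eq s t)
  have "eval M v s \<in> carrier M \<and> f (eval M v s) = eval N (\<lambda>m. f (v m)) s"
       "eval M v t \<in> carrier M \<and> f (eval M v t) = eval N (\<lambda>m. f (v m)) t"
    using Eq.prems eval_iso[OF iso wf] by auto
  moreover have "inj_on f (carrier M)" using iso_bij[OF iso] unfolding bij_betw_def by auto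
  ultimately show ?case by (metis inj_on_eq_iff sat.simps(3))
next
  case (Conj p q)
  then show ?case by auto
next
  case (Disj I F)
  have "\<And>i. i \<in> I \<Longrightarrow> sat M (F i) v = sat N (F i) (\<lambda>m. f (v m))"
  proof -
    fix i assume i: "i \<in> I"
    then show "sat M (F i) v = sat N (F i) (\<lambda>m. f (v m))"
      using Disj.IH[of "F i" v] Disj.prems by auto
  qed
  then show ?case by simp
next
  case (Ex n p)
  have bij: "bij_betw f (carrier M) (carrier N)" using iso_bij[OF iso] .
  have "\<And>c. c \<in> carrier M \<Longrightarrow> sat M p (v(n:=c)) = sat N p ((\<lambda>m. f (v m))(n := f c))"
  proof -
    fix c assume c: "c \<in> carrier M"
    have e: "(\<lambda>m. f ((v(n:=c)) m)) = (\<lambda>m. f (v m))(n := f c)" by (rule ext) simp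
    have "\<forall>m\<in>fv p. (v(n:=c)) m \<in> carrier M" using Ex.prems c by auto
    moreover have "wf_fm arF arR p" using Ex.prems by simp
    ultimately have "sat M p (v(n:=c)) = sat N p (\<lambda>m. f ((v(n:=c)) m))"
      using Ex.IH[of "v(n:=c)"] by blast
    then show "sat M p (v(n:=c)) = sat N p ((\<lambda>m. f (v m))(n := f c))"
      by (simp only: e)
  qed
  moreover have "carrier N = f ` carrier M" using bij by (simp add: bij_betw_def)
  ultimately show ?case by auto
qed auto

lemma asg_in:
  assumes "length x = length bs" "n \<in> set x" shows "asg x bs n \<in> set bs"
proof -
  obtain c where c: "map_of (zip x bs) n = Some c" using map_of_zip_is_Some assms by metis
  then have "c \<in> set bs" by (meson map_of_SomeD set_zip_rightD)
  then show ?thesis using c by (simp add: asg_def)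
qed

lemma asg_map:
  assumes "length x = length bs" "n \<in> set x" shows "asg x (map f bs) n = f (asg x bs n)"
proof -
  have "zip x (map f bs) = map (\<lambda>(k, v). (k, f v)) (zip x bs)"
    by (simp add: zip_map2)
  then have "map_of (zip x (map f bs)) n = map_option f (map_of (zip x bs) n)"
    by (simp add: map_of_map)
  moreover obtain c where "map_of (zip x bs) n = Some c" using map_of_zip_is_Some assms by metis
  ultimately show ?thesis unfolding asg_def by auto
qed

lemma interp_iso:
  assumes iso: "is_iso arF arR M N f" and wf: "wf_strc S arF arR M"
    and p: "wf_fm arF arR p" "fv p \<subseteq> set x" and bs: "bs \<in> interp M x p"
  shows "map f bs \<in> interp N x p"
proof -
  have l: "length x = length bs" "set bs \<subseteq> carrier M" "sat M p (asg x bs)"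
    using bs unfolding interp_def by auto
  have "\<forall>n\<in>fv p. asg x bs n \<in> carrier M"
  proof
    fix n assume "n \<in> fv p"
    then have "n \<in> set x" using p by blast
    then show "asg x bs n \<in> carrier M" using asg_in[OF l(1)] l(2) by blast
  qed
  then have "sat N p (\<lambda>m. f (asg x bs m))" using sat_iso[OF iso wf p(1), of "asg x bs"] l(3) by simp
  moreover have "\<forall>n\<in>fv p. f (asg x bs n) = asg x (map f bs) n"
  proof
    fix n assume "n \<in> fv p"
    then have "n \<in> set x" using p by blast
    then show "f (asg x bs n) = asg x (map f bs) n" using asg_map[OF l(1), of n f] by simp
  qed
  ultimately have "sat N p (asg x (map f bs))"
    using sat_coinc[of p "\<lambda>m. f (asg x bs m)" "asg x (map f bs)" N] by simp
  moreover have "set (map f bs) \<subseteq> carrier N" using iso_bij[OF iso] l unfolding bij_betw_def by auto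
  ultimately show ?thesis using l unfolding interp_def by auto
qed

lemma fv_Exs: "fv (Exs ys p) = fv p - set ys"
  by (induction ys) (auto simp: Exs_def)

lemma wf_Exs: "wf_fm arF arR (Exs ys p) = wf_fm arF arR p"
  by (induction ys) (auto simp: Exs_def)

definition upd :: "(nat \<Rightarrow> 'a set) \<Rightarrow> nat list \<Rightarrow> 'a set list \<Rightarrow> nat \<Rightarrow> 'a set" where
  "upd v ys cs = (\<lambda>n. case map_of (zip ys cs) n of Some c \<Rightarrow> c | None \<Rightarrow> v n)"

lemma upd_Cons: "y \<notin> set ys \<Longrightarrow> length cs = length ys \<Longrightarrow> upd (v(y:=c)) ys cs = upd v (y#ys) (c#cs)"
proof (rule ext)
  fix n assume y: "y \<notin> set ys" and l: "length cs = length ys"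
  show "upd (v(y:=c)) ys cs n = upd v (y#ys) (c#cs) n"
  proof (cases "n = y")
    case True
    then have "map_of (zip ys cs) n = None" using y l map_of_zip_is_Some[OF l[symmetric]]
      by (metis option.exhaust)
    then show ?thesis using True by (simp add: upd_def)
  qed (simp add: upd_def split: option.split)
qed

lemma sat_Exs: "distinct ys \<Longrightarrow> sat M (Exs ys p) v =
   (\<exists>cs. length cs = length ys \<and> set cs \<subseteq> carrier M \<and> sat M p (upd v ys cs))"
proof (induction ys arbitrary: v)
  case Nil
  have "upd v [] [] = v" by (simp add: upd_def)
  then show ?case by (simp add: Exs_def)
next
  case (Cons y ys)
  have e: "Exs (y#ys) p = Ex y (Exs ys p)" by (simp add: Exs_def)
  have "sat M (Exs (y#ys) p) v = (\<exists>c\<in>carrier M. sat M (Exs ys p) (v(y:=c)))"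
    by (simp add: e)
  also have "\<dots> = (\<exists>c\<in>carrier M. \<exists>cs. length cs = length ys \<and> set cs \<subseteq> carrier M \<and> sat M p (upd (v(y:=c)) ys cs))"
    using Cons by simp
  also have "\<dots> = (\<exists>c\<in>carrier M. \<exists>cs. length cs = length ys \<and> set cs \<subseteq> carrier M \<and> sat M p (upd v (y#ys) (c#cs)))"
    using upd_Cons[of y ys] Cons.prems by (metis distinct.simps(2))
  also have "\<dots> = (\<exists>cs. length cs = length (y#ys) \<and> set cs \<subseteq> carrier M \<and> sat M p (upd v (y#ys) cs))"
  proof
    assume "\<exists>c\<in>carrier M. \<exists>cs. length cs = length ys \<and> set cs \<subseteq> carrier M \<and> sat M p (upd v (y#ys) (c#cs))"
    then obtain c cs where "c \<in> carrier M" "length cs = length ys" "set cs \<subseteq> carrier M" "sat M p (upd v (y#ys) (c#cs))"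
      by blast
    then show "\<exists>cs. length cs = length (y#ys) \<and> set cs \<subseteq> carrier M \<and> sat M p (upd v (y#ys) cs)"
      by (intro exI[of _ "c#cs"]) simp
  next
    assume "\<exists>cs. length cs = length (y#ys) \<and> set cs \<subseteq> carrier M \<and> sat M p (upd v (y#ys) cs)"
    then obtain cs where cs: "length cs = length (y#ys)" "set cs \<subseteq> carrier M" "sat M p (upd v (y#ys) cs)"
      by blast
    then obtain c cs' where "cs = c#cs'" by (cases cs) auto
    then show "\<exists>c\<in>carrier M. \<exists>cs. length cs = length ys \<and> set cs \<subseteq> carrier M \<and> sat M p (upd v (y#ys) (c#cs))"
      using cs by auto
  qed
  finally show ?case .
qed

lemma asg_app_x: assumes "length x = length bs" "n \<in> set x"
  shows "asg (x@y) (bs@cs) n = asg x bs n"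
proof -
  obtain c where c: "map_of (zip x bs) n = Some c" using map_of_zip_is_Some assms by metis
  have "zip (x@y) (bs@cs) = zip x bs @ zip y cs" using assms(1) by simp
  then show ?thesis using c by (simp add: asg_def map_add_def)
qed

lemma upd_asg: assumes "length x = length bs" "length y = length cs" "set x \<inter> set y = {}"
  shows "upd (asg x bs) y cs = asg (x@y) (bs@cs)"
proof (rule ext)
  fix n
  have z: "zip (x@y) (bs@cs) = zip x bs @ zip y cs" using assms(1) by simp
  show "upd (asg x bs) y cs n = asg (x@y) (bs@cs) n"
  proof (cases "map_of (zip y cs) n")
    case None
    then show ?thesis by (simp add: upd_def asg_def z map_add_def split: option.split)
  next
    case (Some c)
    then have "n \<in> set y" by (meson map_of_SomeD set_zip_leftD)
    then have "n \<notin> set x" using assms(3) by blast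
    then have "map_of (zip x bs) n = None" using map_of_zip_is_Some[OF assms(1)]
      by (metis option.exhaust)
    then show ?thesis using Some by (simp add: upd_def asg_def z map_add_def)
  qed
qed

lemma carrier_img: "carrier M = (\<lambda>d. cls M d) ` dom M"
  unfolding carrier_def cls_def quotient_def by blast

lemma cls_in: "d \<in> dom M \<Longrightarrow> cls M d \<in> carrier M"
  unfolding carrier_def cls_def by (rule quotientI)

lemma surj_exists:
  assumes inf: "infinite S" and fin: "finite A" and sub: "dom M \<subseteq> S" and ne: "carrier M \<noteq> {}"
  shows "\<exists>g. g ` (S - A) = carrier M"
proof -
  have infd: "infinite (S - A)" using Diff_infinite_finite[OF fin inf] .
  have "(card_of A, card_of (S - A)) \<in> ordLeq"
  proof -
    have "(card_of A, card_of (S - A)) \<in> ordLeq \<or> (card_of (S - A), card_of A) \<in> ordLeq"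
      using ordLeq_total[OF card_of_Well_order card_of_Well_order] .
    then show ?thesis using card_of_ordLeq_finite fin infd by blast
  qed
  moreover have "(card_of (S - A), card_of (S - A)) \<in> ordLeq" by (rule card_of_mono1) simp
  ultimately have "(card_of ((S - A) \<union> A), card_of (S - A)) \<in> ordLeq"
    using card_of_Un_ordLeq_infinite_Field[of "card_of (S - A)" "S - A" A] infd
    by (simp add: Field_card_of card_of_Card_order card_of_card_order_on)
  moreover have "(card_of S, card_of ((S - A) \<union> A)) \<in> ordLeq" by (rule card_of_mono1) blast
  ultimately have 1: "(card_of S, card_of (S - A)) \<in> ordLeq" using ordLeq_transitive by blast
  have "(card_of (carrier M), card_of (dom M)) \<in> ordLeq"
    unfolding carrier_img by (rule card_of_image)
  moreover have "(card_of (dom M), card_of S) \<in> ordLeq" using sub by (rule card_of_mono1)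
  ultimately have "(card_of (carrier M), card_of (S - A)) \<in> ordLeq"
    using 1 ordLeq_transitive by blast
  then show ?thesis using card_of_ordLeq2[OF ne] by blast
qed

lemma transport:
  assumes MT: "M \<in> M_T S arF arR T" and gT: "geom_theory arF arR T"
    and D: "D \<subseteq> S" and h: "h ` D = carrier M"
  shows "\<exists>N F G. N \<in> M_T S arF arR T \<and> dom N = D \<and> is_iso arF arR M N F \<and> is_iso arF arR N M G
     \<and> (\<forall>c\<in>carrier M. G (F c) = c) \<and> (\<forall>d\<in>D. cls N d = F (h d))"
proof -
  have wfM: "wf_strc S arF arR M" using MT unfolding M_T_def is_model_def by blast
  define fib where "fib c = {d\<in>D. h d = c}" for c
  define C where "C = fib ` carrier M"
  define F where "F c = (if c \<in> carrier M then fib c else undefined)" for c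
  define G where "G K = (if K \<in> C then h (SOME d. d \<in> K) else undefined)" for K
  define E where "E = {(d,e). d\<in>D \<and> e\<in>D \<and> h d = h e}"
  define N :: "('a, 'b, 'c) strc" where "N = \<lparr>dom = D, eqv = E,
     fn = \<lambda>g ks. if length ks = arF g \<and> set ks \<subseteq> C then F (fn M g (map G ks)) else undefined,
     rl = \<lambda>r. {ks. length ks = arR r \<and> set ks \<subseteq> C \<and> map G ks \<in> rl M r}\<rparr>"
  have Ed: "d \<in> D \<Longrightarrow> E `` {d} = fib (h d)" for d unfolding E_def fib_def by auto
  have cN: "carrier N = C"
  proof -
    have "D // E = (\<lambda>d. fib (h d)) ` D" unfolding quotient_def using Ed by auto
    also have "\<dots> = C" unfolding C_def using h by (simp add: image_image[symmetric])
    finally show ?thesis by (simp add: carrier_def N_def)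
  qed
  have GF: "G (F c) = c" if c: "c \<in> carrier M" for c
  proof -
    have Fc: "F c = fib c" "fib c \<in> C" using c by (auto simp: F_def C_def)
    obtain d where "d \<in> D" "h d = c" using c h by (metis imageE)
    then have "\<exists>d. d \<in> fib c" unfolding fib_def by blast
    then have "(SOME d. d \<in> fib c) \<in> fib c" by (rule someI_ex)
    then show ?thesis using Fc unfolding G_def fib_def by auto
  qed
  have FG: "G K \<in> carrier M \<and> F (G K) = K" if K: "K \<in> C" for K
  proof -
    obtain c where c: "c \<in> carrier M" "K = fib c" using K C_def by blast
    then have "G K = c" using GF[OF c(1)] by (simp add: F_def)
    then show ?thesis using c by (simp add: F_def)
  qed
  have FC: "F c \<in> C" if "c \<in> carrier M" for c using that by (simp add: F_def C_def)
  have bijF: "bij_betw F (carrier M) C"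
    by (rule bij_betw_byWitness[where f'=G]) (use GF FG FC in auto)
  have bijG: "bij_betw G C (carrier M)"
    by (rule bij_betw_byWitness[where f'=F]) (use GF FG FC in auto)
  have mapGF: "map G (map F bs) = bs" if "set bs \<subseteq> carrier M" for bs
    using that GF by (induction bs) auto
  have mapFG: "map F (map G ks) = ks" if "set ks \<subseteq> C" for ks
    using that FG by (induction ks) auto
  have setG: "set (map G ks) \<subseteq> carrier M" if "set ks \<subseteq> C" for ks
    using that FG by auto
  have setF: "set (map F bs) \<subseteq> C" if "set bs \<subseteq> carrier M" for bs
    using that FC by auto
  have fnN: "fn N g ks = (if length ks = arF g \<and> set ks \<subseteq> C then F (fn M g (map G ks)) else undefined)" for g ks
    by (simp add: N_def)
  have rlN: "rl N r = {ks. length ks = arR r \<and> set ks \<subseteq> C \<and> map G ks \<in> rl M r}" for r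
    by (simp add: N_def)
  have equivE: "equiv D E" unfolding equiv_def refl_on_def sym_def trans_def E_def by auto
  have wfN: "wf_strc S arF arR N"
    unfolding wf_strc_def
  proof (intro conjI allI impI)
    show "dom N \<subseteq> S" using D by (simp add: N_def)
    show "equiv (dom N) (eqv N)" using equivE by (simp add: N_def)
  next
    fix g bs assume a: "length bs = arF g \<and> set bs \<subseteq> carrier N"
    then have "fn M g (map G bs) \<in> carrier M" using wf_fn[OF wfM] setG cN by simp
    then show "fn N g bs \<in> carrier N" using a FC cN fnN by simp
  next
    fix g bs assume "\<not> (length bs = arF g \<and> set bs \<subseteq> carrier N)"
    then have "\<not> (length bs = arF g \<and> set bs \<subseteq> C)" using cN by simp
    then show "fn N g bs = undefined" by (simp only: fnN if_False)
  next
    fix r show "rl N r \<subseteq> {bs. length bs = arR r \<and> set bs \<subseteq> carrier N}" using rlN cN by auto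
  qed
  have isoF: "is_iso arF arR M N F"
    unfolding is_iso_def
  proof (intro conjI allI impI)
    show "bij_betw F (carrier M) (carrier N)" using bijF cN by simp
  next
    fix c assume "c \<notin> carrier M" then show "F c = undefined" by (simp add: F_def)
  next
    fix g bs assume a: "length bs = arF g \<and> set bs \<subseteq> carrier M"
    then show "F (fn M g bs) = fn N g (map F bs)" using fnN mapGF setF by simp
  next
    fix r bs assume a: "length bs = arR r \<and> set bs \<subseteq> carrier M"
    then show "(bs \<in> rl M r) = (map F bs \<in> rl N r)" using rlN mapGF setF by simp
  qed
  have isoG: "is_iso arF arR N M G"
    unfolding is_iso_def
  proof (intro conjI allI impI)
    show "bij_betw G (carrier N) (carrier M)" using bijG cN by simp
  next
    fix c assume "c \<notin> carrier N" then show "G c = undefined" using cN by (simp add: G_def)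
  next
    fix g bs assume a: "length bs = arF g \<and> set bs \<subseteq> carrier N"
    then have "fn M g (map G bs) \<in> carrier M" using wf_fn[OF wfM] setG cN by simp
    then show "G (fn N g bs) = fn M g (map G bs)" using a fnN cN GF by simp
  next
    fix r bs assume a: "length bs = arR r \<and> set bs \<subseteq> carrier N"
    then show "(bs \<in> rl N r) = (map G bs \<in> rl M r)" using rlN cN by simp
  qed
  have modN: "is_model S arF arR T N"
    unfolding is_model_def
  proof (intro conjI)
    show "wf_strc S arF arR N" by (rule wfN)
    show "\<forall>(x, p, q)\<in>T. interp N x p \<subseteq> interp N x q"
    proof (intro ballI, clarify)
      fix x p q ks assume xT: "(x, p, q) \<in> T" and ks: "ks \<in> interp N x p"
      have cx: "fm_in_ctx arF arR x p" "fm_in_ctx arF arR x q"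
        using gT xT unfolding geom_theory_def by auto
      have "map G ks \<in> interp M x p"
        using interp_iso[OF isoG wfN _ _ ks] cx unfolding fm_in_ctx_def by blast
      moreover have "interp M x p \<subseteq> interp M x q"
        using MT xT unfolding M_T_def is_model_def by blast
      ultimately have "map F (map G ks) \<in> interp N x q"
        using interp_iso[OF isoF wfM] cx unfolding fm_in_ctx_def by blast
      moreover have "set ks \<subseteq> C" using ks cN unfolding interp_def by auto
      ultimately show "ks \<in> interp N x q" using mapFG by simp
    qed
  qed
  have clsN: "\<forall>d\<in>D. cls N d = F (h d)"
  proof
    fix d assume d: "d \<in> D"
    then have "h d \<in> carrier M" using h by blast
    then show "cls N d = F (h d)" using Ed[OF d] by (simp add: cls_def N_def F_def)
  qed
  show ?thesis
    apply (rule exI[of _ N], rule exI[of _ F], rule exI[of _ G])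
    using modN isoF isoG GF clsN by (simp add: M_T_def N_def)
qed

theorem lemma3p11:
  fixes S :: "'a set" and \<kappa> :: "'k rel"
    and arF :: "'f \<Rightarrow> nat" and arR :: "'r \<Rightarrow> nat"
    and T :: "('f, 'r, 'i) sequent set"
    and x y :: "nat list" and \<phi> \<psi> :: "('f, 'r, 'i) gfm" and a :: "'a list"
  assumes "Card_order \<kappa>" and "infinite (Field \<kappa>)"
    and "(card_of (UNIV :: ('f + 'r) set), \<kappa>) \<in> ordLeq" and "(\<kappa>, card_of S) \<in> ordLeq"
    and "geom_theory arF arR T"
    and "fm_in_ctx arF arR x \<phi>" and "fm_in_ctx arF arR (x @ y) \<psi>"
    and "distinct a" and "set a \<subseteq> S" and "length a = length y"
  shows "stabilization S arF arR T x \<phi> (basic_open S arF arR T x y \<phi> \<psi> a)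
       = definable S arF arR T x (Conj \<phi> (Exs y \<psi>))"
proof -
  note ctxp = assms(6)[unfolded fm_in_ctx_def] and ctxq = assms(7)[unfolded fm_in_ctx_def]
  have dy: "distinct y" and disj: "set x \<inter> set y = {}" using ctxq by auto
  let ?X = "basic_open S arF arR T x y \<phi> \<psi> a"
  let ?D = "definable S arF arR T x (Conj \<phi> (Exs y \<psi>))"
  have wfC: "wf_fm arF arR (Conj \<phi> (Exs y \<psi>))" using ctxp ctxq by (simp add: wf_Exs)
  have fvC: "fv (Conj \<phi> (Exs y \<psi>)) \<subseteq> set x" using ctxp ctxq by (auto simp: fv_Exs)
  have wfC2: "wf_fm arF arR (Conj \<phi> \<psi>)" using ctxp ctxq by simp
  have fvC2: "fv (Conj \<phi> \<psi>) \<subseteq> set (x @ y)" using ctxp ctxq by auto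
  have key: "bs @ cs \<in> interp M (x @ y) (Conj \<phi> \<psi>) \<longleftrightarrow>
      (length bs = length x \<and> set bs \<subseteq> carrier M \<and> set cs \<subseteq> carrier M \<and>
       sat M \<phi> (asg x bs) \<and> sat M \<psi> (upd (asg x bs) y cs))"
    if lc: "length cs = length y" for M bs cs
  proof -
    have A: "length (bs @ cs) = length (x @ y) \<longleftrightarrow> length bs = length x" using lc by simp
    { assume lb: "length bs = length x"
      have "\<forall>n\<in>fv \<phi>. asg (x@y) (bs@cs) n = asg x bs n"
        using asg_app_x[OF lb[symmetric]] ctxp by blast
      then have "sat M \<phi> (asg (x@y) (bs@cs)) = sat M \<phi> (asg x bs)"
        by (rule sat_coinc)
      moreover have "upd (asg x bs) y cs = asg (x@y) (bs@cs)"
        using upd_asg[OF lb[symmetric] lc[symmetric] disj] .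
      ultimately have "sat M (Conj \<phi> \<psi>) (asg (x@y) (bs@cs)) =
          (sat M \<phi> (asg x bs) \<and> sat M \<psi> (upd (asg x bs) y cs))" by simp }
    then show ?thesis unfolding interp_def using A by auto
  qed
  have D_alt: "bs \<in> interp M x (Conj \<phi> (Exs y \<psi>)) \<longleftrightarrow>
      (\<exists>cs. length cs = length y \<and> bs @ cs \<in> interp M (x @ y) (Conj \<phi> \<psi>))" for M bs
  proof -
    have "bs \<in> interp M x (Conj \<phi> (Exs y \<psi>)) \<longleftrightarrow> (\<exists>cs. length cs = length y \<and>
       (length bs = length x \<and> set bs \<subseteq> carrier M \<and> set cs \<subseteq> carrier M \<and>
       sat M \<phi> (asg x bs) \<and> sat M \<psi> (upd (asg x bs) y cs)))"
      by (auto simp: interp_def sat_Exs[OF dy])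
    also have "\<dots> \<longleftrightarrow> (\<exists>cs. length cs = length y \<and> bs @ cs \<in> interp M (x @ y) (Conj \<phi> \<psi>))"
      using key by blast
    finally show ?thesis .
  qed
  have stD: "stable S arF arR T ?D"
    unfolding stable_def
  proof (clarify)
    fix M N f bs assume I: "(M, N, f) \<in> I_T S arF arR T" and Mb: "(M, bs) \<in> ?D"
    have "wf_strc S arF arR M" "N \<in> M_T S arF arR T" "is_iso arF arR M N f"
      using I unfolding I_T_def M_T_def is_model_def by auto
    then show "(N, map f bs) \<in> ?D"
      using interp_iso[OF _ _ wfC fvC] Mb unfolding definable_def by blast
  qed
  have XD: "?X \<subseteq> ?D"
  proof clarify
    fix M bs assume "(M, bs) \<in> ?X"
    then have M: "M \<in> M_T S arF arR T" "set a \<subseteq> dom M"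
      and i: "bs @ map (cls M) a \<in> interp M (x @ y) (Conj \<phi> \<psi>)"
      unfolding basic_open_def by auto
    have "length (map (cls M) a) = length y" using assms(10) by simp
    then have "bs \<in> interp M x (Conj \<phi> (Exs y \<psi>))" using D_alt i by blast
    then show "(M, bs) \<in> ?D" using M unfolding definable_def by blast
  qed
  have Dsub: "?D \<subseteq> definable S arF arR T x \<phi>"
    unfolding definable_def interp_def by auto
  have "stabilization S arF arR T x \<phi> ?X \<subseteq> ?D"
    unfolding stabilization_def using XD Dsub stD by blast
  moreover have "?D \<subseteq> Y" if Y: "?X \<subseteq> Y" "stable S arF arR T Y" for Y
  proof clarify
    fix M bs assume Mb: "(M, bs) \<in> ?D"
    then have MT: "M \<in> M_T S arF arR T" and bi: "bs \<in> interp M x (Conj \<phi> (Exs y \<psi>))"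
      unfolding definable_def by auto
    obtain cs where cs: "length cs = length y" "bs @ cs \<in> interp M (x @ y) (Conj \<phi> \<psi>)"
      using D_alt bi by blast
    have kk: "length bs = length x" "set bs \<subseteq> carrier M" "set cs \<subseteq> carrier M"
      using key[OF cs(1)] cs(2) by auto
    show "(M, bs) \<in> Y"
    proof (cases "y = []")
      case True
      then have "a = []" using assms(10) by simp
      moreover have "cs = []" using cs(1) True by simp
      ultimately have "(M, bs) \<in> ?X" using cs MT unfolding basic_open_def by simp
      then show ?thesis using Y by blast
    next
      case False
      then obtain c0 where "c0 \<in> set cs" using cs(1) by (cases cs) auto
      then have ne: "carrier M \<noteq> {}" using kk by blast
      have wfM: "wf_strc S arF arR M" using MT unfolding M_T_def is_model_def by blast
      have infS: "infinite S"
        using card_of_ordLeq_infinite[OF ordIso_ordLeq_trans[OF card_of_Field_ordIso[OF assms(1)] assms(4)] assms(2)] .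
      obtain g where g: "g ` (S - set a) = carrier M"
      proof -
        have "dom M \<subseteq> S" using wfM by (simp add: wf_strc_def)
        then show ?thesis using surj_exists[OF infS finite_set _ ne] that by blast
      qed
      define h where "h d = (case map_of (zip a cs) d of Some c \<Rightarrow> c | None \<Rightarrow> g d)" for d
      have la: "length a = length cs" using cs(1) assms(10) by simp
      have ha: "map h a = cs"
      proof (rule nth_equalityI)
        show "length (map h a) = length cs" using la by simp
        fix i assume "i < length (map h a)"
        then have i: "i < length cs" using la by simp
        then show "map h a ! i = cs ! i"
          using map_of_zip_nth[OF la assms(8) i] la by (simp add: h_def)
      qed
      have hS: "h ` S = carrier M"
      proof
        show "h ` S \<subseteq> carrier M"
        proof
          fix c assume "c \<in> h ` S"
          then obtain d where d: "d \<in> S" "c = h d" by blast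
          show "c \<in> carrier M"
          proof (cases "map_of (zip a cs) d")
            case None
            then have "d \<notin> set a" using map_of_zip_is_Some[OF la, of d] by auto
            then show ?thesis using d None g by (auto simp: h_def)
          next
            case (Some c')
            then have "c' \<in> set cs" by (meson map_of_SomeD set_zip_rightD)
            then show ?thesis using d Some kk by (auto simp: h_def)
          qed
        qed
      next
        show "carrier M \<subseteq> h ` S"
        proof
          fix c assume "c \<in> carrier M"
          then have "c \<in> g ` (S - set a)" using g by simp
          then obtain d where d: "d \<in> S - set a" "g d = c" by (rule imageE) (rule that, simp_all)
          then have "map_of (zip a cs) d = None" using map_of_zip_is_Some[OF la, of d]
            by (cases "map_of (zip a cs) d") auto
          then have "h d = c" using d by (simp add: h_def)
          then show "c \<in> h ` S" using d(1) by (intro image_eqI[where x=d]) simp_all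
        qed
      qed
      obtain N F G where N: "N \<in> M_T S arF arR T" "dom N = S" "is_iso arF arR M N F"
        "is_iso arF arR N M G" "\<forall>c\<in>carrier M. G (F c) = c" "\<forall>d\<in>S. cls N d = F (h d)"
        using transport[OF MT assms(5) order_refl hS] by (elim exE conjE) (rule that; assumption)
      have clsa: "map (cls N) a = map F cs"
      proof -
        have "map (cls N) a = map (\<lambda>d. F (h d)) a" using N(6) assms(9) by auto
        also have "\<dots> = map F (map h a)" by simp
        finally show ?thesis using ha by simp
      qed
      have "map F (bs @ cs) \<in> interp N (x @ y) (Conj \<phi> \<psi>)"
        using interp_iso[OF N(3) wfM wfC2 fvC2 cs(2)] .
      then have "(N, map F bs) \<in> ?X"
        using N(1,2) assms(9) clsa unfolding basic_open_def by simp
      then have "(N, map F bs) \<in> Y" using Y by blast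
      moreover have "(N, M, G) \<in> I_T S arF arR T" using N(1,4) MT unfolding I_T_def by simp
      ultimately have "(M, map G (map F bs)) \<in> Y"
        using Y(2) unfolding stable_def by fast
      moreover have "map G (map F bs) = bs" unfolding map_map by (rule map_idI) (use N(5) kk(2) in auto)
      ultimately show ?thesis by simp
    qed
  qed
  then have "?D \<subseteq> stabilization S arF arR T x \<phi> ?X"
    unfolding stabilization_def by blast
  ultimately show ?thesis by blast
qed

end
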